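(* Let $X=\bigsqcup_{\lambda\in\Lambda}G_\lambda$ be an MCQ, $R$ a ring, $M$ a left $R$-module, and let $f_1,f_2:X\times X\to R$, $\phi_1:X\times X\to M$, $\phi_2:\bigsqcup_\lambda(G_\lambda\times G_\lambda)\to M$ be maps. On the set $\widetilde X=\bigsqcup_{\lambda\in\Lambda}(G_\lambda\times M)$ define $(x,u)\triangleleft(y,v):=(x\triangleleft y,\ f_1(x,y)u+f_2(x,y)v+\phi_1(x,y))$ for all $(x,u),(y,v)\in\widetilde X$, and $(a,u)(b,v):=(ab,\ u+f_1(a,a^{-1})v+\phi_2(a,b))$ for all $(a,u),(b,v)\in G_\lambda\times M$. If $(f_1,f_2;\phi_1,\phi_2)$ is an augmented MCQ Alexander pair, then $\widetilde X$ with these operations is an MCQ whose groups are the $G_\lambda\times M$; moreover the identity of $G_\lambda\times M$ is $(e_\lambda,-\phi_2(e_\lambda,e_\lambda))$ and the inverse of $(a,u)\in G_\lambda\times M$ is $(a^{-1},\,-f_1(a,a)u-\phi_2(a^{-1},a)-\phi_2(e_\lambda,e_\lambda))$. Conversely, if $M=R$ and $\widetilde X$ with these operations is an MCQ with groups $G_\lambda\times R$, then $(f_1,f_2;\phi_1,\phi_2)$ is an augmented MCQ Alexander pair.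
   Context: A multiple conjugation quandle (MCQ) is a set $X=\bigsqcup_{\lambda\in\Lambda}G_\lambda$ that is a disjoint union of groups $G_\lambda$, together with a binary operation $\triangleleft:X\times X\to X$ such that: (i) for all $a,b\in G_\lambda$, $a\triangleleft b=b^{-1}ab$; (ii) for all $x\in X$ and $a,b\in G_\lambda$, $x\triangleleft e_\lambda=x$ and $x\triangleleft(ab)=(x\triangleleft a)\triangleleft b$, where $e_\lambda$ is the identity of $G_\lambda$; (iii) for all $x,y,z\in X$, $(x\triangleleft y)\triangleleft z=(x\triangleleft z)\triangleleft(y\triangleleft z)$; (iv) for all $x\in X$ and $a,b\in G_\lambda$, the elements $a\triangleleft x$ and $b\triangleleft x$ lie in a common group $G_\mu$ and $(ab)\triangleleft x=(a\triangleleft x)(b\triangleleft x)$. For $x\in X$, $G_x$ denotes the group $G_\lambda$ containing $x$, $e_x$ its identity, and $x^{-1}$ the inverse of $x$ in $G_x$. $\bigsqcup_{\lambda}(G_\lambda\times G_\lambda)$ is the set of pairs of elements lying in a common group $G_\lambda$. Rings have a multiplicative identity $1\neq0$ and need not be commutative. An MCQ Alexander pair is a pair of maps $f_1,f_2:X\times X\to R$ such that: (A1) for all $a,b\in G_\lambda$: $f_1(a,b)+f_2(a,b)=f_1(a,a^{-1}b)$; (A2) for all $a,b\in G_\lambda$ and $x\in X$: $f_1(a,x)=f_1(b,x)$ and $f_2(ab,x)=f_2(a,x)+f_1(b\triangleleft x,a^{-1}\triangleleft x)f_2(b,x)$; (A3) for all $x\in X$ and $a,b\in G_\lambda$: $f_1(x,e_\lambda)=1$,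 $f_1(x,ab)=f_1(x\triangleleft a,b)f_1(x,a)$, $f_2(x,ab)=f_1(x\triangleleft a,b)f_2(x,a)$; (A4) for all $x,y,z\in X$: $f_1(x\triangleleft y,z)f_1(x,y)=f_1(x\triangleleft z,y\triangleleft z)f_1(x,z)$; $f_1(x\triangleleft y,z)f_2(x,y)=f_2(x\triangleleft z,y\triangleleft z)f_1(y,z)$; $f_2(x\triangleleft y,z)=f_1(x\triangleleft z,y\triangleleft z)f_2(x,z)+f_2(x\triangleleft z,y\triangleleft z)f_2(y,z)$. For an MCQ Alexander pair $(f_1,f_2)$ and a left $R$-module $M$, an $(f_1,f_2)$-twisted 2-cocycle is a pair of maps $\phi_1:X\times X\to M$, $\phi_2:\bigsqcup_\lambda(G_\lambda\times G_\lambda)\to M$ such that: (T1) for all $a,b,c\in G_\lambda$: $\phi_2(a,b)+\phi_2(ab,c)=f_1(a,a^{-1})\phi_2(b,c)+\phi_2(a,bc)$; (T2) for all $a,b\in G_\lambda$: $f_1(b,b^{-1})\phi_1(a,b)+\phi_2(b,b^{-1}ab)=\phi_2(a,b)$; (T3) for all $x\in X$, $a,b\in G_\lambda$: $f_2(x,ab)\phi_2(a,b)+\phi_1(x,ab)=f_1(x\triangleleft a,b)\phi_1(x,a)+\phi_1(x\triangleleft a,b)$; (T4) for all $x,y,z\in X$: $f_1(x\triangleleft y,z)\phi_1(x,y)+\phi_1(x\triangleleft y,z)=f_1(x\triangleleft z,y\triangleleft z)\phi_1(x,z)+f_2(x\triangleleft z,y\triangleleft z)\phi_1(y,z)+\phi_1(x\triangleleft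 z,y\triangleleft z)$; (T5) for all $a,b\in G_\lambda$, $x\in X$: $f_1(ab,x)\phi_2(a,b)+\phi_1(ab,x)=\phi_1(a,x)+f_1(a\triangleleft x,a^{-1}\triangleleft x)\phi_1(b,x)+\phi_2(a\triangleleft x,b\triangleleft x)$. A quadruple $(f_1,f_2;\phi_1,\phi_2)$ is an augmented MCQ Alexander pair if $(f_1,f_2)$ is an MCQ Alexander pair and $(\phi_1,\phi_2)$ is an $(f_1,f_2)$-twisted 2-cocycle. *)

theory Defs
  imports "HOL-Algebra.Group"
begin

(* A multiple conjugation quandle X = disjoint union of the groups G l (l : Lam),
   with binary operation tri.  Only the values of tri on X matter. *)

definition mcq_set :: "'l set \<Rightarrow> ('l \<Rightarrow> 'a monoid) \<Rightarrow> 'a set" where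
  "mcq_set Lam G = (\<Union>l\<in>Lam. carrier (G l))"

definition mcq :: "'l set \<Rightarrow> ('l \<Rightarrow> 'a monoid) \<Rightarrow> ('a \<Rightarrow> 'a \<Rightarrow> 'a) \<Rightarrow> bool" where
  "mcq Lam G tri \<longleftrightarrow>
     (\<forall>l\<in>Lam. group (G l)) \<and>
     (\<forall>l\<in>Lam. \<forall>m\<in>Lam. l \<noteq> m \<longrightarrow> carrier (G l) \<inter> carrier (G m) = {}) \<and>
     (\<forall>x\<in>mcq_set Lam G. \<forall>y\<in>mcq_set Lam G. tri x y \<in> mcq_set Lam G) \<and>
     \<comment> \<open>(i)\<close>
     (\<forall>l\<in>Lam. \<forall>a\<in>carrier (G l). \<forall>b\<in>carrier (G l).
        tri a b = (inv\<^bsub>G l\<^esub> b \<otimes>\<^bsub>G l\<^esub> a) \<otimes>\<^bsub>G l\<^esub> b) \<and>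
     \<comment> \<open>(ii)\<close>
     (\<forall>x\<in>mcq_set Lam G. \<forall>l\<in>Lam.
        tri x \<one>\<^bsub>G l\<^esub> = x \<and>
        (\<forall>a\<in>carrier (G l). \<forall>b\<in>carrier (G l). tri x (a \<otimes>\<^bsub>G l\<^esub> b) = tri (tri x a) b)) \<and>
     \<comment> \<open>(iii)\<close>
     (\<forall>x\<in>mcq_set Lam G. \<forall>y\<in>mcq_set Lam G. \<forall>z\<in>mcq_set Lam G.
        tri (tri x y) z = tri (tri x z) (tri y z)) \<and>
     \<comment> \<open>(iv)\<close>
     (\<forall>x\<in>mcq_set Lam G. \<forall>l\<in>Lam. \<forall>a\<in>carrier (G l). \<forall>b\<in>carrier (G l).
        \<exists>m\<in>Lam. tri a x \<in> carrier (G m) \<and> tri b x \<in> carrier (G m) \<and>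
          tri (a \<otimes>\<^bsub>G l\<^esub> b) x = tri a x \<otimes>\<^bsub>G m\<^esub> tri b x)"

definition lmodule :: "('r::ring_1 \<Rightarrow> 'm::ab_group_add \<Rightarrow> 'm) \<Rightarrow> bool" where
  "lmodule s \<longleftrightarrow>
     (\<forall>r u v. s r (u + v) = s r u + s r v) \<and>
     (\<forall>r q u. s (r + q) u = s r u + s q u) \<and>
     (\<forall>r q u. s (r * q) u = s r (s q u)) \<and>
     (\<forall>u. s 1 u = u)"

definition alexander_pair ::
  "'l set \<Rightarrow> ('l \<Rightarrow> 'a monoid) \<Rightarrow> ('a \<Rightarrow> 'a \<Rightarrow> 'a) \<Rightarrow>
   ('a \<Rightarrow> 'a \<Rightarrow> 'r::ring_1) \<Rightarrow> ('a \<Rightarrow> 'a \<Rightarrow> 'r) \<Rightarrow> bool" where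
  "alexander_pair Lam G tri f1 f2 \<longleftrightarrow>
     \<comment> \<open>(A1)\<close>
     (\<forall>l\<in>Lam. \<forall>a\<in>carrier (G l). \<forall>b\<in>carrier (G l).
        f1 a b + f2 a b = f1 a (inv\<^bsub>G l\<^esub> a \<otimes>\<^bsub>G l\<^esub> b)) \<and>
     \<comment> \<open>(A2)\<close>
     (\<forall>l\<in>Lam. \<forall>a\<in>carrier (G l). \<forall>b\<in>carrier (G l). \<forall>x\<in>mcq_set Lam G.
        f1 a x = f1 b x \<and>
        f2 (a \<otimes>\<^bsub>G l\<^esub> b) x = f2 a x + f1 (tri b x) (tri (inv\<^bsub>G l\<^esub> a) x) * f2 b x) \<and>
     \<comment> \<open>(A3)\<close>
     (\<forall>x\<in>mcq_set Lam G. \<forall>l\<in>Lam.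
        f1 x \<one>\<^bsub>G l\<^esub> = 1 \<and>
        (\<forall>a\<in>carrier (G l). \<forall>b\<in>carrier (G l).
           f1 x (a \<otimes>\<^bsub>G l\<^esub> b) = f1 (tri x a) b * f1 x a \<and>
           f2 x (a \<otimes>\<^bsub>G l\<^esub> b) = f1 (tri x a) b * f2 x a)) \<and>
     \<comment> \<open>(A4)\<close>
     (\<forall>x\<in>mcq_set Lam G. \<forall>y\<in>mcq_set Lam G. \<forall>z\<in>mcq_set Lam G.
        f1 (tri x y) z * f1 x y = f1 (tri x z) (tri y z) * f1 x z \<and>
        f1 (tri x y) z * f2 x y = f2 (tri x z) (tri y z) * f1 y z \<and>
        f2 (tri x y) z = f1 (tri x z) (tri y z) * f2 x z + f2 (tri x z) (tri y z) * f2 y z)"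

(* phi2 is only meaningful on pairs lying in a common group; its other values are irrelevant *)
definition twisted_cocycle ::
  "'l set \<Rightarrow> ('l \<Rightarrow> 'a monoid) \<Rightarrow> ('a \<Rightarrow> 'a \<Rightarrow> 'a) \<Rightarrow> ('r::ring_1 \<Rightarrow> 'm::ab_group_add \<Rightarrow> 'm) \<Rightarrow>
   ('a \<Rightarrow> 'a \<Rightarrow> 'r) \<Rightarrow> ('a \<Rightarrow> 'a \<Rightarrow> 'r) \<Rightarrow> ('a \<Rightarrow> 'a \<Rightarrow> 'm) \<Rightarrow> ('a \<Rightarrow> 'a \<Rightarrow> 'm) \<Rightarrow> bool" where
  "twisted_cocycle Lam G tri s f1 f2 \<phi>1 \<phi>2 \<longleftrightarrow>
     \<comment> \<open>(T1)\<close>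
     (\<forall>l\<in>Lam. \<forall>a\<in>carrier (G l). \<forall>b\<in>carrier (G l). \<forall>c\<in>carrier (G l).
        \<phi>2 a b + \<phi>2 (a \<otimes>\<^bsub>G l\<^esub> b) c
          = s (f1 a (inv\<^bsub>G l\<^esub> a)) (\<phi>2 b c) + \<phi>2 a (b \<otimes>\<^bsub>G l\<^esub> c)) \<and>
     \<comment> \<open>(T2)\<close>
     (\<forall>l\<in>Lam. \<forall>a\<in>carrier (G l). \<forall>b\<in>carrier (G l).
        s (f1 b (inv\<^bsub>G l\<^esub> b)) (\<phi>1 a b) + \<phi>2 b ((inv\<^bsub>G l\<^esub> b \<otimes>\<^bsub>G l\<^esub> a) \<otimes>\<^bsub>G l\<^esub> b)
          = \<phi>2 a b) \<and>
     \<comment> \<open>(T3)\<close>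
     (\<forall>x\<in>mcq_set Lam G. \<forall>l\<in>Lam. \<forall>a\<in>carrier (G l). \<forall>b\<in>carrier (G l).
        s (f2 x (a \<otimes>\<^bsub>G l\<^esub> b)) (\<phi>2 a b) + \<phi>1 x (a \<otimes>\<^bsub>G l\<^esub> b)
          = s (f1 (tri x a) b) (\<phi>1 x a) + \<phi>1 (tri x a) b) \<and>
     \<comment> \<open>(T4)\<close>
     (\<forall>x\<in>mcq_set Lam G. \<forall>y\<in>mcq_set Lam G. \<forall>z\<in>mcq_set Lam G.
        s (f1 (tri x y) z) (\<phi>1 x y) + \<phi>1 (tri x y) z
          = s (f1 (tri x z) (tri y z)) (\<phi>1 x z) + s (f2 (tri x z) (tri y z)) (\<phi>1 y z)
            + \<phi>1 (tri x z) (tri y z)) \<and>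
     \<comment> \<open>(T5)\<close>
     (\<forall>l\<in>Lam. \<forall>a\<in>carrier (G l). \<forall>b\<in>carrier (G l). \<forall>x\<in>mcq_set Lam G.
        s (f1 (a \<otimes>\<^bsub>G l\<^esub> b) x) (\<phi>2 a b) + \<phi>1 (a \<otimes>\<^bsub>G l\<^esub> b) x
          = \<phi>1 a x + s (f1 (tri a x) (tri (inv\<^bsub>G l\<^esub> a) x)) (\<phi>1 b x)
            + \<phi>2 (tri a x) (tri b x))"

definition aug_alexander_pair ::
  "'l set \<Rightarrow> ('l \<Rightarrow> 'a monoid) \<Rightarrow> ('a \<Rightarrow> 'a \<Rightarrow> 'a) \<Rightarrow> ('r::ring_1 \<Rightarrow> 'm::ab_group_add \<Rightarrow> 'm) \<Rightarrow>
   ('a \<Rightarrow> 'a \<Rightarrow> 'r) \<Rightarrow> ('a \<Rightarrow> 'a \<Rightarrow> 'r) \<Rightarrow> ('a \<Rightarrow> 'a \<Rightarrow> 'm) \<Rightarrow> ('a \<Rightarrow> 'a \<Rightarrow> 'm) \<Rightarrow> bool" where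
  "aug_alexander_pair Lam G tri s f1 f2 \<phi>1 \<phi>2 \<longleftrightarrow>
     alexander_pair Lam G tri f1 f2 \<and> twisted_cocycle Lam G tri s f1 f2 \<phi>1 \<phi>2"

definition ext_group ::
  "('l \<Rightarrow> 'a monoid) \<Rightarrow> ('r::ring_1 \<Rightarrow> 'm::ab_group_add \<Rightarrow> 'm) \<Rightarrow> ('a \<Rightarrow> 'a \<Rightarrow> 'r) \<Rightarrow>
   ('a \<Rightarrow> 'a \<Rightarrow> 'm) \<Rightarrow> 'l \<Rightarrow> ('a \<times> 'm) \<Rightarrow> ('a \<times> 'm) monoid" where
  "ext_group G s f1 \<phi>2 l e =
     \<lparr>carrier = carrier (G l) \<times> UNIV,
      mult = (\<lambda>(a, u) (b, v). (a \<otimes>\<^bsub>G l\<^esub> b, u + s (f1 a (inv\<^bsub>G l\<^esub> a)) v + \<phi>2 a b)),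
      one = e\<rparr>"

definition ext_tri ::
  "('a \<Rightarrow> 'a \<Rightarrow> 'a) \<Rightarrow> ('r::ring_1 \<Rightarrow> 'm::ab_group_add \<Rightarrow> 'm) \<Rightarrow> ('a \<Rightarrow> 'a \<Rightarrow> 'r) \<Rightarrow>
   ('a \<Rightarrow> 'a \<Rightarrow> 'r) \<Rightarrow> ('a \<Rightarrow> 'a \<Rightarrow> 'm) \<Rightarrow> ('a \<times> 'm) \<Rightarrow> ('a \<times> 'm) \<Rightarrow> ('a \<times> 'm)" where
  "ext_tri tri s f1 f2 \<phi>1 =
     (\<lambda>(x, u) (y, v). (tri x y, s (f1 x y) u + s (f2 x y) v + \<phi>1 x y))"

end

theory Submission
  imports Defs
begin


lemma lmod_simps:
  assumes "lmodule s"
  shows "s r (u + v) = s r u + s r v" "s (r + q) u = s r u + s q u"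
    "s (r * q) u = s r (s q u)" "s 1 u = u"
    "s r 0 = 0" "s 0 u = 0" "s r (- u) = - s r u" "s (- r) u = - s r u"
    "s r (u - v) = s r u - s r v" "s (r - q) u = s r u - s q u"
proof -
  have a: "\<And>r u v. s r (u + v) = s r u + s r v" and b: "\<And>r q u. s (r + q) u = s r u + s q u"
    using assms unfolding lmodule_def by auto
  show "s r (u + v) = s r u + s r v" "s (r + q) u = s r u + s q u"
    "s (r * q) u = s r (s q u)" "s 1 u = u" using assms unfolding lmodule_def by auto
  have z: "\<And>r. s r 0 = 0" using a[of _ 0 0] by simp
  have z2: "\<And>u. s 0 u = 0" using b[of 0 0] by simp
  show "s r 0 = 0" "s 0 u = 0" by (fact z, fact z2)
  have n: "\<And>r u. s r (- u) = - s r u" by (metis a z add.right_inverse add_eq_0_iff)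
  have n2: "\<And>r u. s (- r) u = - s r u" by (metis b z2 add.right_inverse add_eq_0_iff)
  show "s r (- u) = - s r u" "s (- r) u = - s r u" by (fact n, fact n2)
  show "s r (u - v) = s r u - s r v" using a[of r u "- v"] n[of r v] by (simp only: diff_conv_add_uminus)
  show "s (r - q) u = s r u - s q u" using b[of r "- q" u] n2[of q u] by (simp only: diff_conv_add_uminus)
qed

lemma lin_diff: "(p::'a::ab_group_add) = q \<Longrightarrow> p' = q' \<Longrightarrow> p - p' = q - q'" by simp

locale setting =
  fixes Lam :: "'l set" and G :: "'l \<Rightarrow> 'a monoid" and tri :: "'a \<Rightarrow> 'a \<Rightarrow> 'a"
  assumes X: "mcq Lam G tri"
begin

abbreviation S where "S \<equiv> mcq_set Lam G"

lemma grp: "l \<in> Lam \<Longrightarrow> group (G l)" using X[unfolded mcq_def, THEN conjunct1] by blast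
lemma disj: "l \<in> Lam \<Longrightarrow> m \<in> Lam \<Longrightarrow> x \<in> carrier (G l) \<Longrightarrow> x \<in> carrier (G m) \<Longrightarrow> l = m"
  using X[unfolded mcq_def, THEN conjunct2, THEN conjunct1] by blast
lemma inS: "l \<in> Lam \<Longrightarrow> a \<in> carrier (G l) \<Longrightarrow> a \<in> S" by (auto simp: mcq_set_def)
lemma tri_S: "x \<in> S \<Longrightarrow> y \<in> S \<Longrightarrow> tri x y \<in> S" using X[unfolded mcq_def, THEN conjunct2, THEN conjunct2, THEN conjunct1] by blast
lemma conj: "l \<in> Lam \<Longrightarrow> a \<in> carrier (G l) \<Longrightarrow> b \<in> carrier (G l) \<Longrightarrow>
   tri a b = (inv\<^bsub>G l\<^esub> b \<otimes>\<^bsub>G l\<^esub> a) \<otimes>\<^bsub>G l\<^esub> b"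
  using X[unfolded mcq_def, THEN conjunct2, THEN conjunct2, THEN conjunct2, THEN conjunct1] by blast
lemma tri_one: "x \<in> S \<Longrightarrow> l \<in> Lam \<Longrightarrow> tri x \<one>\<^bsub>G l\<^esub> = x"
  using X[unfolded mcq_def, THEN conjunct2, THEN conjunct2, THEN conjunct2, THEN conjunct2, THEN conjunct1] by blast
lemma tri_mult: "x \<in> S \<Longrightarrow> l \<in> Lam \<Longrightarrow> a \<in> carrier (G l) \<Longrightarrow> b \<in> carrier (G l) \<Longrightarrow>
   tri x (a \<otimes>\<^bsub>G l\<^esub> b) = tri (tri x a) b"
  using X[unfolded mcq_def, THEN conjunct2, THEN conjunct2, THEN conjunct2, THEN conjunct2, THEN conjunct1] by blast
lemma tri_dist: "x \<in> S \<Longrightarrow> y \<in> S \<Longrightarrow> z \<in> S \<Longrightarrow> tri (tri x y) z = tri (tri x z) (tri y z)"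
  using X[unfolded mcq_def, THEN conjunct2, THEN conjunct2, THEN conjunct2, THEN conjunct2, THEN conjunct2, THEN conjunct1] by blast
lemma tri_hom: "x \<in> S \<Longrightarrow> l \<in> Lam \<Longrightarrow> a \<in> carrier (G l) \<Longrightarrow> b \<in> carrier (G l) \<Longrightarrow>
  \<exists>m\<in>Lam. tri a x \<in> carrier (G m) \<and> tri b x \<in> carrier (G m) \<and>
          tri (a \<otimes>\<^bsub>G l\<^esub> b) x = tri a x \<otimes>\<^bsub>G m\<^esub> tri b x"
  using X[unfolded mcq_def, THEN conjunct2, THEN conjunct2, THEN conjunct2, THEN conjunct2, THEN conjunct2, THEN conjunct2] by blast

lemma tri_cancel: "x \<in> S \<Longrightarrow> l \<in> Lam \<Longrightarrow> a \<in> carrier (G l) \<Longrightarrow> tri (tri x a) (inv\<^bsub>G l\<^esub> a) = x"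
  by (metis grp group.inv_closed group.r_inv tri_mult tri_one)

lemma tri_self: "l \<in> Lam \<Longrightarrow> a \<in> carrier (G l) \<Longrightarrow> tri a a = a"
  using conj[of l a a] grp[of l] by (simp add: group.l_inv group.is_monoid monoid.l_one)

lemma tri_one_left: "l \<in> Lam \<Longrightarrow> a \<in> carrier (G l) \<Longrightarrow> tri \<one>\<^bsub>G l\<^esub> a = \<one>\<^bsub>G l\<^esub>"
  using conj[of l "\<one>\<^bsub>G l\<^esub>" a] grp[of l] by (simp add: group.l_inv monoid.r_one group.is_monoid)

lemma tri_in: "l \<in> Lam \<Longrightarrow> a \<in> carrier (G l) \<Longrightarrow> b \<in> carrier (G l) \<Longrightarrow> tri a b \<in> carrier (G l)"
  using conj[of l a b] grp[of l] by (simp add: group.is_monoid monoid.m_closed group.inv_closed)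

lemma tri_inv_img:
  assumes l: "l \<in> Lam" and a: "a \<in> carrier (G l)" and x: "x \<in> S" and m: "m \<in> Lam"
    and am: "tri a x \<in> carrier (G m)"
  shows "tri (inv\<^bsub>G l\<^esub> a) x \<in> carrier (G m) \<and> inv\<^bsub>G m\<^esub> (tri a x) = tri (inv\<^bsub>G l\<^esub> a) x"
proof -
  interpret Gl: group "G l" using grp l .
  interpret Gm: group "G m" using grp m .
  obtain m1 where m1: "m1 \<in> Lam" "tri a x \<in> carrier (G m1)" "tri (inv\<^bsub>G l\<^esub> a) x \<in> carrier (G m1)"
     "tri (a \<otimes>\<^bsub>G l\<^esub> inv\<^bsub>G l\<^esub> a) x = tri a x \<otimes>\<^bsub>G m1\<^esub> tri (inv\<^bsub>G l\<^esub> a) x"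
    using tri_hom[OF x l a Gl.inv_closed[OF a]] by blast
  have "m1 = m" using disj[OF m1(1) m m1(2) am] .
  obtain m2 where m2: "m2 \<in> Lam" "tri \<one>\<^bsub>G l\<^esub> x \<in> carrier (G m2)"
     "tri (\<one>\<^bsub>G l\<^esub> \<otimes>\<^bsub>G l\<^esub> \<one>\<^bsub>G l\<^esub>) x = tri \<one>\<^bsub>G l\<^esub> x \<otimes>\<^bsub>G m2\<^esub> tri \<one>\<^bsub>G l\<^esub> x"
    using tri_hom[OF x l Gl.one_closed Gl.one_closed] by blast
  interpret Gm2: group "G m2" using grp m2(1) .
  have one2: "tri \<one>\<^bsub>G l\<^esub> x = \<one>\<^bsub>G m2\<^esub>" using m2(2,3) by simp
  have eq: "tri \<one>\<^bsub>G l\<^esub> x = tri a x \<otimes>\<^bsub>G m\<^esub> tri (inv\<^bsub>G l\<^esub> a) x"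
    using m1(4) \<open>m1 = m\<close> a by simp
  have "tri \<one>\<^bsub>G l\<^esub> x \<in> carrier (G m)" using eq am m1(3) \<open>m1 = m\<close> by simp
  then have "m2 = m" using disj[OF m2(1) m m2(2)] by simp
  then have "tri a x \<otimes>\<^bsub>G m\<^esub> tri (inv\<^bsub>G l\<^esub> a) x = \<one>\<^bsub>G m\<^esub>" using eq one2 by simp
  then have "tri (inv\<^bsub>G l\<^esub> a) x \<otimes>\<^bsub>G m\<^esub> tri a x = \<one>\<^bsub>G m\<^esub>"
    using Gm.inv_comm am m1(3) \<open>m1 = m\<close> by blast
  then show ?thesis using Gm.inv_equality am m1(3) \<open>m1 = m\<close> by blast
qed

end

locale alex = setting +
  fixes f1 f2
  assumes AP: "alexander_pair Lam G tri f1 f2"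
begin

lemma A1: "l \<in> Lam \<Longrightarrow> a \<in> carrier (G l) \<Longrightarrow> b \<in> carrier (G l) \<Longrightarrow>
   f1 a b + f2 a b = f1 a (inv\<^bsub>G l\<^esub> a \<otimes>\<^bsub>G l\<^esub> b)"
  using AP[unfolded alexander_pair_def, THEN conjunct1] by blast
lemma A2a: "l \<in> Lam \<Longrightarrow> a \<in> carrier (G l) \<Longrightarrow> b \<in> carrier (G l) \<Longrightarrow> x \<in> S \<Longrightarrow> f1 a x = f1 b x"
  using AP[unfolded alexander_pair_def, THEN conjunct2, THEN conjunct1] by blast
lemma A2b: "l \<in> Lam \<Longrightarrow> a \<in> carrier (G l) \<Longrightarrow> b \<in> carrier (G l) \<Longrightarrow> x \<in> S \<Longrightarrow>
   f2 (a \<otimes>\<^bsub>G l\<^esub> b) x = f2 a x + f1 (tri b x) (tri (inv\<^bsub>G l\<^esub> a) x) * f2 b x"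
  using AP[unfolded alexander_pair_def, THEN conjunct2, THEN conjunct1] by blast
lemma A3a: "x \<in> S \<Longrightarrow> l \<in> Lam \<Longrightarrow> f1 x \<one>\<^bsub>G l\<^esub> = 1"
  using AP[unfolded alexander_pair_def, THEN conjunct2, THEN conjunct2, THEN conjunct1] by blast
lemma A3b: "x \<in> S \<Longrightarrow> l \<in> Lam \<Longrightarrow> a \<in> carrier (G l) \<Longrightarrow> b \<in> carrier (G l) \<Longrightarrow>
   f1 x (a \<otimes>\<^bsub>G l\<^esub> b) = f1 (tri x a) b * f1 x a"
  using AP[unfolded alexander_pair_def, THEN conjunct2, THEN conjunct2, THEN conjunct1] by blast
lemma A3c: "x \<in> S \<Longrightarrow> l \<in> Lam \<Longrightarrow> a \<in> carrier (G l) \<Longrightarrow> b \<in> carrier (G l) \<Longrightarrow>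
   f2 x (a \<otimes>\<^bsub>G l\<^esub> b) = f1 (tri x a) b * f2 x a"
  using AP[unfolded alexander_pair_def, THEN conjunct2, THEN conjunct2, THEN conjunct1] by blast
lemma A4: "x \<in> S \<Longrightarrow> y \<in> S \<Longrightarrow> z \<in> S \<Longrightarrow>
        f1 (tri x y) z * f1 x y = f1 (tri x z) (tri y z) * f1 x z \<and>
        f1 (tri x y) z * f2 x y = f2 (tri x z) (tri y z) * f1 y z \<and>
        f2 (tri x y) z = f1 (tri x z) (tri y z) * f2 x z + f2 (tri x z) (tri y z) * f2 y z"
  using AP[unfolded alexander_pair_def, THEN conjunct2, THEN conjunct2, THEN conjunct2] by blast

lemma A2e: "l \<in> Lam \<Longrightarrow> a \<in> carrier (G l) \<Longrightarrow> x \<in> S \<Longrightarrow> f1 a x = f1 \<one>\<^bsub>G l\<^esub> x"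
  using A2a grp group.is_monoid monoid.one_closed by metis

lemma F_mult:
  assumes l: "l \<in> Lam" and a: "a \<in> carrier (G l)" and b: "b \<in> carrier (G l)"
  shows "f1 (a \<otimes>\<^bsub>G l\<^esub> b) (inv\<^bsub>G l\<^esub> (a \<otimes>\<^bsub>G l\<^esub> b))
     = f1 a (inv\<^bsub>G l\<^esub> a) * f1 b (inv\<^bsub>G l\<^esub> b)"
proof -
  interpret g: group "G l" using grp l .
  have S1: "\<one>\<^bsub>G l\<^esub> \<in> S" using inS l by simp
  have "f1 (a \<otimes>\<^bsub>G l\<^esub> b) (inv\<^bsub>G l\<^esub> (a \<otimes>\<^bsub>G l\<^esub> b))
        = f1 \<one>\<^bsub>G l\<^esub> (inv\<^bsub>G l\<^esub> (a \<otimes>\<^bsub>G l\<^esub> b))"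
    using A2e[OF l g.m_closed[OF a b] inS[OF l g.inv_closed[OF g.m_closed[OF a b]]]] .
  also have "\<dots> = f1 \<one>\<^bsub>G l\<^esub> (inv\<^bsub>G l\<^esub> b \<otimes>\<^bsub>G l\<^esub> inv\<^bsub>G l\<^esub> a)"
    using a b by (simp add: g.inv_mult_group)
  also have "\<dots> = f1 \<one>\<^bsub>G l\<^esub> (inv\<^bsub>G l\<^esub> a) * f1 \<one>\<^bsub>G l\<^esub> (inv\<^bsub>G l\<^esub> b)"
    using A3b[OF S1 l, of "inv\<^bsub>G l\<^esub> b" "inv\<^bsub>G l\<^esub> a"] tri_one_left[OF l] a b by simp
  also have "\<dots> = f1 a (inv\<^bsub>G l\<^esub> a) * f1 b (inv\<^bsub>G l\<^esub> b)"
    using A2e[OF l a inS[OF l g.inv_closed[OF a]]] A2e[OF l b inS[OF l g.inv_closed[OF b]]] by simp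
  finally show ?thesis .
qed

lemma F_inv:
  assumes l: "l \<in> Lam" and a: "a \<in> carrier (G l)"
  shows "f1 a a * f1 a (inv\<^bsub>G l\<^esub> a) = 1" "f1 a (inv\<^bsub>G l\<^esub> a) * f1 a a = 1"
    "f1 (inv\<^bsub>G l\<^esub> a) (inv\<^bsub>G l\<^esub> (inv\<^bsub>G l\<^esub> a)) = f1 a a"
proof -
  interpret g: group "G l" using grp l .
  have S1: "\<one>\<^bsub>G l\<^esub> \<in> S" using inS l by simp
  have e1: "f1 a (inv\<^bsub>G l\<^esub> a) = f1 \<one>\<^bsub>G l\<^esub> (inv\<^bsub>G l\<^esub> a)" "f1 a a = f1 \<one>\<^bsub>G l\<^esub> a"
    using A2e[OF l a inS[OF l g.inv_closed[OF a]]] A2e[OF l a inS[OF l a]] by auto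
  have "1 = f1 \<one>\<^bsub>G l\<^esub> (a \<otimes>\<^bsub>G l\<^esub> inv\<^bsub>G l\<^esub> a)" using A3a[OF S1 l] a by simp
  also have "\<dots> = f1 \<one>\<^bsub>G l\<^esub> (inv\<^bsub>G l\<^esub> a) * f1 \<one>\<^bsub>G l\<^esub> a"
    using A3b[OF S1 l a, of "inv\<^bsub>G l\<^esub> a"] tri_one_left[OF l a] a by simp
  finally show "f1 a (inv\<^bsub>G l\<^esub> a) * f1 a a = 1" using e1 by simp
  have "1 = f1 \<one>\<^bsub>G l\<^esub> (inv\<^bsub>G l\<^esub> a \<otimes>\<^bsub>G l\<^esub> a)" using A3a[OF S1 l] a by simp
  also have "\<dots> = f1 \<one>\<^bsub>G l\<^esub> a * f1 \<one>\<^bsub>G l\<^esub> (inv\<^bsub>G l\<^esub> a)"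
    using A3b[OF S1 l _ a, of "inv\<^bsub>G l\<^esub> a"] tri_one_left[OF l, of "inv\<^bsub>G l\<^esub> a"] a by simp
  finally show "f1 a a * f1 a (inv\<^bsub>G l\<^esub> a) = 1" using e1 by simp
  show "f1 (inv\<^bsub>G l\<^esub> a) (inv\<^bsub>G l\<^esub> (inv\<^bsub>G l\<^esub> a)) = f1 a a"
    using A2a[OF l g.inv_closed[OF a] a inS[OF l a]] a by simp
qed

lemma f1_conj: "l \<in> Lam \<Longrightarrow> a \<in> carrier (G l) \<Longrightarrow> b \<in> carrier (G l) \<Longrightarrow> f1 a b = f1 b b"
  using A2a inS by blast

lemma f2_conj:
  assumes l: "l \<in> Lam" and a: "a \<in> carrier (G l)" and b: "b \<in> carrier (G l)"
  shows "f2 a b = f1 b b * f1 a (inv\<^bsub>G l\<^esub> a) - f1 b b"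
proof -
  interpret g: group "G l" using grp l .
  have S1: "\<one>\<^bsub>G l\<^esub> \<in> S" using inS l by simp
  have "f1 a (inv\<^bsub>G l\<^esub> a \<otimes>\<^bsub>G l\<^esub> b) = f1 \<one>\<^bsub>G l\<^esub> (inv\<^bsub>G l\<^esub> a \<otimes>\<^bsub>G l\<^esub> b)"
    using A2e[OF l a inS[OF l g.m_closed[OF g.inv_closed[OF a] b]]] .
  also have "\<dots> = f1 \<one>\<^bsub>G l\<^esub> b * f1 \<one>\<^bsub>G l\<^esub> (inv\<^bsub>G l\<^esub> a)"
    using A3b[OF S1 l _ b, of "inv\<^bsub>G l\<^esub> a"] tri_one_left[OF l, of "inv\<^bsub>G l\<^esub> a"] a by simp
  also have "\<dots> = f1 b b * f1 a (inv\<^bsub>G l\<^esub> a)"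
    using A2e[OF l a inS[OF l g.inv_closed[OF a]]] A2e[OF l b inS[OF l b]] by simp
  finally show ?thesis using A1[OF l a b] f1_conj[OF l a b] by (simp add: algebra_simps)
qed

lemma f2_shift:
  assumes x: "x \<in> S" and l: "l \<in> Lam" and a: "a \<in> carrier (G l)" and b: "b \<in> carrier (G l)"
  shows "f2 x (a \<otimes>\<^bsub>G l\<^esub> b) * f1 a (inv\<^bsub>G l\<^esub> a) = f2 (tri x a) b"
proof -
  interpret g: group "G l" using grp l .
  define y where "y = tri x a"
  have y: "y \<in> S" using y_def tri_S x inS l a by simp
  have "f1 y a * f2 x a = f2 y a * f1 a a"
    using A4[OF x inS[OF l a] inS[OF l a]] tri_self[OF l a] y_def by simp
  also have "f2 y a = f1 y a * f2 y \<one>\<^bsub>G l\<^esub>"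
    using A3c[OF y l g.one_closed a] tri_one[OF y l] a by simp
  finally have e: "f1 y a * f2 x a = f1 y a * (f2 y \<one>\<^bsub>G l\<^esub> * f1 a a)" by (simp add: mult.assoc)
  have L: "f1 (tri y a) (inv\<^bsub>G l\<^esub> a) * f1 y a = 1"
    using A3b[OF y l a g.inv_closed[OF a]] A3a[OF y l] a by simp
  have "f2 x a = f2 y \<one>\<^bsub>G l\<^esub> * f1 a a"
    using arg_cong[OF e, of "\<lambda>t. f1 (tri y a) (inv\<^bsub>G l\<^esub> a) * t"] L by (simp add: mult.assoc[symmetric])
  then have e2: "f2 x a * f1 a (inv\<^bsub>G l\<^esub> a) = f2 y \<one>\<^bsub>G l\<^esub>"
    using F_inv(1)[OF l a] by (simp add: mult.assoc)
  have "f2 x (a \<otimes>\<^bsub>G l\<^esub> b) * f1 a (inv\<^bsub>G l\<^esub> a) = f1 y b * f2 y \<one>\<^bsub>G l\<^esub>"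
    using A3c[OF x l a b] e2 y_def by (simp add: mult.assoc)
  also have "\<dots> = f2 y b"
    using A3c[OF y l g.one_closed b] tri_one[OF y l] b by simp
  finally show ?thesis using y_def by simp
qed

lemma f1_hom:
  assumes l: "l \<in> Lam" and a: "a \<in> carrier (G l)" and b: "b \<in> carrier (G l)" and x: "x \<in> S"
  shows "f1 (a \<otimes>\<^bsub>G l\<^esub> b) x * f1 a (inv\<^bsub>G l\<^esub> a) = f1 (tri a x) (tri (inv\<^bsub>G l\<^esub> a) x) * f1 b x"
proof -
  interpret g: group "G l" using grp l .
  have "f1 (tri a (inv\<^bsub>G l\<^esub> a)) x * f1 a (inv\<^bsub>G l\<^esub> a) = f1 (tri a x) (tri (inv\<^bsub>G l\<^esub> a) x) * f1 a x"
    using A4[OF inS[OF l a] inS[OF l g.inv_closed[OF a]] x] by simp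
  moreover have "f1 (tri a (inv\<^bsub>G l\<^esub> a)) x = f1 (a \<otimes>\<^bsub>G l\<^esub> b) x"
    using A2a[OF l tri_in[OF l a g.inv_closed[OF a]] g.m_closed[OF a b] x] .
  moreover have "f1 a x = f1 b x" using A2a[OF l a b x] .
  ultimately show ?thesis by simp
qed

end

locale aug = alex +
  fixes s \<phi>1 \<phi>2
  assumes M: "lmodule s" and TC: "twisted_cocycle Lam G tri s f1 f2 \<phi>1 \<phi>2"
begin

lemmas sm = lmod_simps[OF M]

lemma T1: "l \<in> Lam \<Longrightarrow> a \<in> carrier (G l) \<Longrightarrow> b \<in> carrier (G l) \<Longrightarrow> c \<in> carrier (G l) \<Longrightarrow>
        \<phi>2 a b + \<phi>2 (a \<otimes>\<^bsub>G l\<^esub> b) c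
          = s (f1 a (inv\<^bsub>G l\<^esub> a)) (\<phi>2 b c) + \<phi>2 a (b \<otimes>\<^bsub>G l\<^esub> c)"
  using TC[unfolded twisted_cocycle_def, THEN conjunct1] by blast
lemma T2: "l \<in> Lam \<Longrightarrow> a \<in> carrier (G l) \<Longrightarrow> b \<in> carrier (G l) \<Longrightarrow>
        s (f1 b (inv\<^bsub>G l\<^esub> b)) (\<phi>1 a b) + \<phi>2 b ((inv\<^bsub>G l\<^esub> b \<otimes>\<^bsub>G l\<^esub> a) \<otimes>\<^bsub>G l\<^esub> b)
          = \<phi>2 a b"
  using TC[unfolded twisted_cocycle_def, THEN conjunct2, THEN conjunct1] by blast
lemma T3: "x \<in> S \<Longrightarrow> l \<in> Lam \<Longrightarrow> a \<in> carrier (G l) \<Longrightarrow> b \<in> carrier (G l) \<Longrightarrow>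
        s (f2 x (a \<otimes>\<^bsub>G l\<^esub> b)) (\<phi>2 a b) + \<phi>1 x (a \<otimes>\<^bsub>G l\<^esub> b)
          = s (f1 (tri x a) b) (\<phi>1 x a) + \<phi>1 (tri x a) b"
  using TC[unfolded twisted_cocycle_def, THEN conjunct2, THEN conjunct2, THEN conjunct1] by blast
lemma T4: "x \<in> S \<Longrightarrow> y \<in> S \<Longrightarrow> z \<in> S \<Longrightarrow>
        s (f1 (tri x y) z) (\<phi>1 x y) + \<phi>1 (tri x y) z
          = s (f1 (tri x z) (tri y z)) (\<phi>1 x z) + s (f2 (tri x z) (tri y z)) (\<phi>1 y z)
            + \<phi>1 (tri x z) (tri y z)"
  using TC[unfolded twisted_cocycle_def, THEN conjunct2, THEN conjunct2, THEN conjunct2, THEN conjunct1] by blast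
lemma T5: "l \<in> Lam \<Longrightarrow> a \<in> carrier (G l) \<Longrightarrow> b \<in> carrier (G l) \<Longrightarrow> x \<in> S \<Longrightarrow>
        s (f1 (a \<otimes>\<^bsub>G l\<^esub> b) x) (\<phi>2 a b) + \<phi>1 (a \<otimes>\<^bsub>G l\<^esub> b) x
          = \<phi>1 a x + s (f1 (tri a x) (tri (inv\<^bsub>G l\<^esub> a) x)) (\<phi>1 b x)
            + \<phi>2 (tri a x) (tri b x)"
  using TC[unfolded twisted_cocycle_def, THEN conjunct2, THEN conjunct2, THEN conjunct2, THEN conjunct2] by blast

lemma p_left: "l \<in> Lam \<Longrightarrow> c \<in> carrier (G l) \<Longrightarrow> \<phi>2 \<one>\<^bsub>G l\<^esub> c = \<phi>2 \<one>\<^bsub>G l\<^esub> \<one>\<^bsub>G l\<^esub>"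
proof -
  assume l: "l \<in> Lam" and c: "c \<in> carrier (G l)"
  interpret g: group "G l" using grp l .
  have "f1 \<one>\<^bsub>G l\<^esub> (inv\<^bsub>G l\<^esub> \<one>\<^bsub>G l\<^esub>) = 1" using A3a[OF inS[OF l g.one_closed] l] by simp
  then show ?thesis using T1[OF l g.one_closed g.one_closed c] c by (simp add: sm)
qed

lemma p_right: "l \<in> Lam \<Longrightarrow> a \<in> carrier (G l) \<Longrightarrow>
   \<phi>2 a \<one>\<^bsub>G l\<^esub> = s (f1 a (inv\<^bsub>G l\<^esub> a)) (\<phi>2 \<one>\<^bsub>G l\<^esub> \<one>\<^bsub>G l\<^esub>)"
  using T1[of l a "\<one>\<^bsub>G l\<^esub>" "\<one>\<^bsub>G l\<^esub>"] grp[of l]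
  by (simp add: group.is_monoid monoid.l_one monoid.r_one)

lemma phi1_conj:
  assumes l: "l \<in> Lam" and a: "a \<in> carrier (G l)" and b: "b \<in> carrier (G l)"
  shows "\<phi>1 a b = \<phi>2 (inv\<^bsub>G l\<^esub> b) a + \<phi>2 (inv\<^bsub>G l\<^esub> b \<otimes>\<^bsub>G l\<^esub> a) b
           - \<phi>2 (inv\<^bsub>G l\<^esub> b) b - \<phi>2 \<one>\<^bsub>G l\<^esub> \<one>\<^bsub>G l\<^esub>"
proof -
  interpret g: group "G l" using grp l .
  define bi where "bi = inv\<^bsub>G l\<^esub> b"
  define c where "c = (bi \<otimes>\<^bsub>G l\<^esub> a) \<otimes>\<^bsub>G l\<^esub> b"
  have bi: "bi \<in> carrier (G l)" using b bi_def by simp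
  have c: "c \<in> carrier (G l)" using a b bi c_def by simp
  have bc: "b \<otimes>\<^bsub>G l\<^esub> c = a \<otimes>\<^bsub>G l\<^esub> b"
    using a b bi unfolding c_def bi_def by (simp add: g.m_assoc[symmetric])
  have Fbi: "f1 bi (inv\<^bsub>G l\<^esub> bi) = f1 b b" using F_inv(3)[OF l b] bi_def by simp
  have e1: "s (f1 b (inv\<^bsub>G l\<^esub> b)) (\<phi>1 a b) + \<phi>2 b c = \<phi>2 a b"
    using T2[OF l a b] c_def bi_def by simp
  have e2: "\<phi>2 bi a + \<phi>2 (bi \<otimes>\<^bsub>G l\<^esub> a) b = s (f1 b b) (\<phi>2 a b) + \<phi>2 bi (a \<otimes>\<^bsub>G l\<^esub> b)"
    using T1[OF l bi a b] Fbi by simp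
  have e3: "\<phi>2 bi b + \<phi>2 \<one>\<^bsub>G l\<^esub> \<one>\<^bsub>G l\<^esub> = s (f1 b b) (\<phi>2 b c) + \<phi>2 bi (a \<otimes>\<^bsub>G l\<^esub> b)"
    using T1[OF l bi b c] Fbi bc p_left[OF l c] bi_def b by simp
  have e1': "s (f1 b (inv\<^bsub>G l\<^esub> b)) (\<phi>1 a b) = \<phi>2 a b - \<phi>2 b c" using e1 by (simp add: eq_diff_eq)
  have "\<phi>1 a b = s (f1 b b * f1 b (inv\<^bsub>G l\<^esub> b)) (\<phi>1 a b)" using F_inv(1)[OF l b] sm by simp
  also have "\<dots> = s (f1 b b) (\<phi>2 a b - \<phi>2 b c)" by (simp only: sm(3) e1')
  also have "\<dots> = s (f1 b b) (\<phi>2 a b) - s (f1 b b) (\<phi>2 b c)" by (simp add: sm)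
  finally show ?thesis using e2 e3 unfolding bi_def[symmetric]
    by (simp add: algebra_simps eq_diff_eq diff_eq_eq)
qed

lemma phi1_one: "x \<in> S \<Longrightarrow> l \<in> Lam \<Longrightarrow> \<phi>1 x \<one>\<^bsub>G l\<^esub> = s (f2 x \<one>\<^bsub>G l\<^esub>) (\<phi>2 \<one>\<^bsub>G l\<^esub> \<one>\<^bsub>G l\<^esub>)"
proof -
  assume x: "x \<in> S" and l: "l \<in> Lam"
  interpret g: group "G l" using grp l .
  show ?thesis using T3[OF x l g.one_closed g.one_closed] A3a[OF x l] tri_one[OF x l]
    by (simp add: sm)
qed

abbreviation EG where "EG l \<equiv> ext_group G s f1 \<phi>2 l (\<one>\<^bsub>G l\<^esub>, - \<phi>2 \<one>\<^bsub>G l\<^esub> \<one>\<^bsub>G l\<^esub>)"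

lemma EG_mult: "(a, u) \<otimes>\<^bsub>EG l\<^esub> (b, v) = (a \<otimes>\<^bsub>G l\<^esub> b, u + s (f1 a (inv\<^bsub>G l\<^esub> a)) v + \<phi>2 a b)"
  by (simp add: ext_group_def)
lemma EG_carrier: "carrier (EG l) = carrier (G l) \<times> UNIV" by (simp add: ext_group_def)
lemma EG_one: "\<one>\<^bsub>EG l\<^esub> = (\<one>\<^bsub>G l\<^esub>, - \<phi>2 \<one>\<^bsub>G l\<^esub> \<one>\<^bsub>G l\<^esub>)" by (simp add: ext_group_def)

lemma EG_group:
  assumes l: "l \<in> Lam"
  shows "group (EG l) \<and> (\<forall>a\<in>carrier (G l). \<forall>u. inv\<^bsub>EG l\<^esub> (a, u)
     = (inv\<^bsub>G l\<^esub> a, - s (f1 a a) u - \<phi>2 (inv\<^bsub>G l\<^esub> a) a - \<phi>2 \<one>\<^bsub>G l\<^esub> \<one>\<^bsub>G l\<^esub>))"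
proof -
  interpret g: group "G l" using grp l .
  let ?e = "\<phi>2 \<one>\<^bsub>G l\<^esub> \<one>\<^bsub>G l\<^esub>"
  have F1: "f1 \<one>\<^bsub>G l\<^esub> (inv\<^bsub>G l\<^esub> \<one>\<^bsub>G l\<^esub>) = 1" using A3a[OF inS[OF l g.one_closed] l] by simp
  have assoc: "((a,u) \<otimes>\<^bsub>EG l\<^esub> (b,v)) \<otimes>\<^bsub>EG l\<^esub> (c,w) = (a,u) \<otimes>\<^bsub>EG l\<^esub> ((b,v) \<otimes>\<^bsub>EG l\<^esub> (c,w))"
    if a: "a \<in> carrier (G l)" and b: "b \<in> carrier (G l)" and c: "c \<in> carrier (G l)" for a b c u v w
    using T1[OF l a b c] F_mult[OF l a b] a b c
    by (simp add: EG_mult g.m_assoc sm algebra_simps)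
  have lone: "\<one>\<^bsub>EG l\<^esub> \<otimes>\<^bsub>EG l\<^esub> (b,v) = (b,v)" if b: "b \<in> carrier (G l)" for b v
    using b p_left[OF l b] F1 by (simp add: EG_mult EG_one sm)
  have linv: "(inv\<^bsub>G l\<^esub> a, - s (f1 a a) u - \<phi>2 (inv\<^bsub>G l\<^esub> a) a - ?e) \<otimes>\<^bsub>EG l\<^esub> (a,u) = \<one>\<^bsub>EG l\<^esub>"
    if a: "a \<in> carrier (G l)" for a u
    using a F_inv(3)[OF l a] by (simp add: EG_mult EG_one)
  have grp: "group (EG l)"
  proof (rule groupI)
    show "x \<otimes>\<^bsub>EG l\<^esub> y \<in> carrier (EG l)" if "x \<in> carrier (EG l)" "y \<in> carrier (EG l)" for x y
      using that by (cases x, cases y) (simp add: EG_mult EG_carrier)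
    show "\<one>\<^bsub>EG l\<^esub> \<in> carrier (EG l)" by (simp add: EG_one EG_carrier)
    show "x \<otimes>\<^bsub>EG l\<^esub> y \<otimes>\<^bsub>EG l\<^esub> z = x \<otimes>\<^bsub>EG l\<^esub> (y \<otimes>\<^bsub>EG l\<^esub> z)"
      if "x \<in> carrier (EG l)" "y \<in> carrier (EG l)" "z \<in> carrier (EG l)" for x y z
      using that assoc by (cases x, cases y, cases z) (simp add: EG_carrier)
    show "\<one>\<^bsub>EG l\<^esub> \<otimes>\<^bsub>EG l\<^esub> x = x" if "x \<in> carrier (EG l)" for x
      using that lone by (cases x) (simp add: EG_carrier)
    show "\<exists>y\<in>carrier (EG l). y \<otimes>\<^bsub>EG l\<^esub> x = \<one>\<^bsub>EG l\<^esub>" if "x \<in> carrier (EG l)" for x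
      using that linv by (cases x) (force simp: EG_carrier)
  qed
  have "inv\<^bsub>EG l\<^esub> (a, u)
     = (inv\<^bsub>G l\<^esub> a, - s (f1 a a) u - \<phi>2 (inv\<^bsub>G l\<^esub> a) a - ?e)" if a: "a \<in> carrier (G l)" for a u
    using group.inv_equality[OF grp linv[OF a]] a by (simp add: EG_carrier)
  with grp show ?thesis by blast
qed


abbreviation ET where "ET \<equiv> ext_tri tri s f1 f2 \<phi>1"

lemma ET_simp: "ET (x, u) (y, v) = (tri x y, s (f1 x y) u + s (f2 x y) v + \<phi>1 x y)"
  by (simp add: ext_tri_def)

lemma EG_set: "mcq_set Lam EG = S \<times> UNIV"
  by (auto simp: mcq_set_def EG_carrier)

lemma cond_i:
  assumes l: "l \<in> Lam" and a: "a \<in> carrier (G l)" and b: "b \<in> carrier (G l)"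
  shows "ET (a, u) (b, v) = (inv\<^bsub>EG l\<^esub> (b, v) \<otimes>\<^bsub>EG l\<^esub> (a, u)) \<otimes>\<^bsub>EG l\<^esub> (b, v)"
proof -
  interpret g: group "G l" using grp l .
  have bi: "inv\<^bsub>G l\<^esub> b \<in> carrier (G l)" using b by simp
  have Fbi: "f1 (inv\<^bsub>G l\<^esub> b) b = f1 b b" using F_inv(3)[OF l b] b by simp
  have Fbia: "f1 (inv\<^bsub>G l\<^esub> b \<otimes>\<^bsub>G l\<^esub> a) (inv\<^bsub>G l\<^esub> (inv\<^bsub>G l\<^esub> b \<otimes>\<^bsub>G l\<^esub> a))
      = f1 b b * f1 a (inv\<^bsub>G l\<^esub> a)"
    using F_mult[OF l bi a] F_inv(3)[OF l b] by simp
  have f2e: "s (f2 a b) v = s (f1 b b) (s (f1 a (inv\<^bsub>G l\<^esub> a)) v) - s (f1 b b) v"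
    using f2_conj[OF l a b] by (simp add: sm)
  have "inv\<^bsub>EG l\<^esub> (b, v) = (inv\<^bsub>G l\<^esub> b, - s (f1 b b) v - \<phi>2 (inv\<^bsub>G l\<^esub> b) b - \<phi>2 \<one>\<^bsub>G l\<^esub> \<one>\<^bsub>G l\<^esub>)"
    using EG_group[OF l] b by blast
  then show ?thesis
    using f1_conj[OF l a b] conj[OF l a b] Fbi Fbia b
    by (simp add: ET_simp EG_mult sm) (simp add: f2e phi1_conj[OF l a b] algebra_simps)
qed

lemma cond_ii1:
  assumes x: "x \<in> S" and l: "l \<in> Lam"
  shows "ET (x, w) \<one>\<^bsub>EG l\<^esub> = (x, w)"
  using tri_one[OF x l] A3a[OF x l] phi1_one[OF x l] by (simp add: EG_one ET_simp sm)

lemma cond_ii2: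
  assumes x: "x \<in> S" and l: "l \<in> Lam" and a: "a \<in> carrier (G l)" and b: "b \<in> carrier (G l)"
  shows "ET (x, w) ((a, u) \<otimes>\<^bsub>EG l\<^esub> (b, v)) = ET (ET (x, w) (a, u)) (b, v)"
proof -
  have e1: "s (f2 x (a \<otimes>\<^bsub>G l\<^esub> b)) (s (f1 a (inv\<^bsub>G l\<^esub> a)) v) = s (f2 (tri x a) b) v"
    using f2_shift[OF x l a b] by (simp add: sm(3)[symmetric])
  have e2: "\<phi>1 x (a \<otimes>\<^bsub>G l\<^esub> b) = s (f1 (tri x a) b) (\<phi>1 x a) + \<phi>1 (tri x a) b
      - s (f2 x (a \<otimes>\<^bsub>G l\<^esub> b)) (\<phi>2 a b)"
    using T3[OF x l a b] by (simp add: algebra_simps eq_diff_eq)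
  have e3: "s (f2 x (a \<otimes>\<^bsub>G l\<^esub> b)) u = s (f1 (tri x a) b) (s (f2 x a) u)"
    using A3c[OF x l a b] by (simp add: sm)
  have e4: "s (f1 x (a \<otimes>\<^bsub>G l\<^esub> b)) w = s (f1 (tri x a) b) (s (f1 x a) w)"
    using A3b[OF x l a b] by (simp add: sm)
  show ?thesis
    using tri_mult[OF x l a b]
    by (simp add: ET_simp EG_mult sm(1) e1 e2 e3 e4 algebra_simps)
qed

lemma cond_iii:
  assumes x: "x \<in> S" and y: "y \<in> S" and z: "z \<in> S"
  shows "ET (ET (x, u) (y, v)) (z, w) = ET (ET (x, u) (z, w)) (ET (y, v) (z, w))"
proof -
  have e1: "s (f1 (tri x y) z) (s (f1 x y) u) = s (f1 (tri x z) (tri y z)) (s (f1 x z) u)"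
    using A4[OF x y z] by (simp add: sm(3)[symmetric])
  have e2: "s (f1 (tri x y) z) (s (f2 x y) v) = s (f2 (tri x z) (tri y z)) (s (f1 y z) v)"
    using A4[OF x y z] by (simp add: sm(3)[symmetric])
  have e3: "s (f2 (tri x y) z) w = s (f1 (tri x z) (tri y z)) (s (f2 x z) w)
       + s (f2 (tri x z) (tri y z)) (s (f2 y z) w)"
    using A4[OF x y z] by (simp add: sm)
  have e4: "\<phi>1 (tri x y) z = s (f1 (tri x z) (tri y z)) (\<phi>1 x z) + s (f2 (tri x z) (tri y z)) (\<phi>1 y z)
            + \<phi>1 (tri x z) (tri y z) - s (f1 (tri x y) z) (\<phi>1 x y)"
    using T4[OF x y z] by (simp add: algebra_simps eq_diff_eq)
  show ?thesis
    using tri_dist[OF x y z] by (simp add: ET_simp sm(1) e1 e2 e3 e4 algebra_simps)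
qed

lemma cond_iv:
  assumes x: "x \<in> S" and l: "l \<in> Lam" and a: "a \<in> carrier (G l)" and b: "b \<in> carrier (G l)"
  shows "\<exists>m\<in>Lam. ET (a, u) (x, w) \<in> carrier (EG m) \<and> ET (b, v) (x, w) \<in> carrier (EG m) \<and>
          ET ((a, u) \<otimes>\<^bsub>EG l\<^esub> (b, v)) (x, w) = ET (a, u) (x, w) \<otimes>\<^bsub>EG m\<^esub> ET (b, v) (x, w)"
proof -
  interpret g: group "G l" using grp l .
  obtain m where m: "m \<in> Lam" "tri a x \<in> carrier (G m)" "tri b x \<in> carrier (G m)"
     "tri (a \<otimes>\<^bsub>G l\<^esub> b) x = tri a x \<otimes>\<^bsub>G m\<^esub> tri b x"
    using tri_hom[OF x l a b] by blast
  have iv: "inv\<^bsub>G m\<^esub> (tri a x) = tri (inv\<^bsub>G l\<^esub> a) x" "tri (inv\<^bsub>G l\<^esub> a) x \<in> carrier (G m)"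
    using tri_inv_img[OF l a x m(1,2)] by auto
  define K where "K = f1 (tri a x) (tri (inv\<^bsub>G l\<^esub> a) x)"
  have Kb: "f1 (tri b x) (tri (inv\<^bsub>G l\<^esub> a) x) = K"
    using A2a[OF m(1) m(3) m(2) inS[OF m(1) iv(2)]] K_def by simp
  have e1: "f1 (a \<otimes>\<^bsub>G l\<^esub> b) x = f1 a x" using A2a[OF l g.m_closed[OF a b] a x] .
  have e2: "s (f1 a x) (s (f1 a (inv\<^bsub>G l\<^esub> a)) v) = s K (s (f1 b x) v)"
    using f1_hom[OF l a b x] e1 K_def by (simp add: sm(3)[symmetric])
  have e3: "s (f2 (a \<otimes>\<^bsub>G l\<^esub> b) x) w = s (f2 a x) w + s K (s (f2 b x) w)"
    using A2b[OF l a b x] Kb by (simp add: sm)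
  have e4: "\<phi>1 (a \<otimes>\<^bsub>G l\<^esub> b) x = \<phi>1 a x + s K (\<phi>1 b x) + \<phi>2 (tri a x) (tri b x)
      - s (f1 a x) (\<phi>2 a b)"
    using T5[OF l a b x] e1 K_def by (simp add: algebra_simps eq_diff_eq)
  have "ET ((a, u) \<otimes>\<^bsub>EG l\<^esub> (b, v)) (x, w) = ET (a, u) (x, w) \<otimes>\<^bsub>EG m\<^esub> ET (b, v) (x, w)"
    using m(4) iv(1)
    by (simp add: ET_simp EG_mult sm(1) e1 e2 e3 e4 algebra_simps K_def)
  then show ?thesis using m by (auto simp: ET_simp EG_carrier)
qed

lemma EG_mcq: "mcq Lam EG ET"
  unfolding mcq_def
proof (intro conjI)
  show "\<forall>l\<in>Lam. group (EG l)" using EG_group by blast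
  show "\<forall>l\<in>Lam. \<forall>m\<in>Lam. l \<noteq> m \<longrightarrow> carrier (EG l) \<inter> carrier (EG m) = {}"
    unfolding EG_carrier using X[unfolded mcq_def, THEN conjunct2, THEN conjunct1] by blast
  show "\<forall>x\<in>mcq_set Lam EG. \<forall>y\<in>mcq_set Lam EG. ET x y \<in> mcq_set Lam EG"
    unfolding EG_set using tri_S by (auto simp: ET_simp)
  show "\<forall>l\<in>Lam. \<forall>a\<in>carrier (EG l). \<forall>b\<in>carrier (EG l).
        ET a b = (inv\<^bsub>EG l\<^esub> b \<otimes>\<^bsub>EG l\<^esub> a) \<otimes>\<^bsub>EG l\<^esub> b"
    using cond_i by (auto simp: EG_carrier)
  show "\<forall>x\<in>mcq_set Lam EG. \<forall>l\<in>Lam. ET x \<one>\<^bsub>EG l\<^esub> = x \<and>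
        (\<forall>a\<in>carrier (EG l). \<forall>b\<in>carrier (EG l). ET x (a \<otimes>\<^bsub>EG l\<^esub> b) = ET (ET x a) b)"
    unfolding EG_set using cond_ii1 cond_ii2 by (auto simp: EG_carrier)
  show "\<forall>x\<in>mcq_set Lam EG. \<forall>y\<in>mcq_set Lam EG. \<forall>z\<in>mcq_set Lam EG.
        ET (ET x y) z = ET (ET x z) (ET y z)"
    unfolding EG_set using cond_iii by auto
  show "\<forall>x\<in>mcq_set Lam EG. \<forall>l\<in>Lam. \<forall>a\<in>carrier (EG l). \<forall>b\<in>carrier (EG l).
        \<exists>m\<in>Lam. ET a x \<in> carrier (EG m) \<and> ET b x \<in> carrier (EG m) \<and>
          ET (a \<otimes>\<^bsub>EG l\<^esub> b) x = ET a x \<otimes>\<^bsub>EG m\<^esub> ET b x"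
  proof (intro ballI)
    fix X l A B assume "X \<in> mcq_set Lam EG" "l \<in> Lam" "A \<in> carrier (EG l)" "B \<in> carrier (EG l)"
    then obtain x w a u b v where "X = (x, w)" "A = (a, u)" "B = (b, v)" "x \<in> S"
      "a \<in> carrier (G l)" "b \<in> carrier (G l)"
      unfolding EG_set EG_carrier by auto
    then show "\<exists>m\<in>Lam. ET A X \<in> carrier (EG m) \<and> ET B X \<in> carrier (EG m) \<and>
          ET (A \<otimes>\<^bsub>EG l\<^esub> B) X = ET A X \<otimes>\<^bsub>EG m\<^esub> ET B X"
      using cond_iv \<open>l \<in> Lam\<close> by simp
  qed
qed

end

locale conv = setting +
  fixes g1 g2 \<psi>1 \<psi>2 e
  assumes E: "mcq Lam (\<lambda>l. ext_group G (*) g1 \<psi>2 l (e l)) (ext_tri tri (*) g1 g2 \<psi>1)"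
begin

abbreviation H where "H l \<equiv> ext_group G (*) g1 \<psi>2 l (e l)"
abbreviation ET where "ET \<equiv> ext_tri tri (*) g1 g2 \<psi>1"

lemma H_mult: "(a, u) \<otimes>\<^bsub>ext_group G (*) g1 \<psi>2 l E\<^esub> (b, v) = (a \<otimes>\<^bsub>G l\<^esub> b, u + g1 a (inv\<^bsub>G l\<^esub> a) * v + \<psi>2 a b)"
  by (simp add: ext_group_def)
lemma H_carrier: "carrier (ext_group G (*) g1 \<psi>2 l E) = carrier (G l) \<times> UNIV" by (simp add: ext_group_def)
lemma H_one: "\<one>\<^bsub>ext_group G (*) g1 \<psi>2 l E\<^esub> = E" by (simp add: ext_group_def)
lemma ET_simp: "ET (x, u) (y, v) = (tri x y, g1 x y * u + g2 x y * v + \<psi>1 x y)"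
  by (simp add: ext_tri_def)
lemma H_set: "mcq_set Lam H = S \<times> UNIV"
  by (auto simp: mcq_set_def H_carrier)

lemma Hgrp: "l \<in> Lam \<Longrightarrow> group (H l)" using E[unfolded mcq_def, THEN conjunct1] by blast

lemma E_i: "l \<in> Lam \<Longrightarrow> a \<in> carrier (G l) \<Longrightarrow> b \<in> carrier (G l) \<Longrightarrow>
   ET (a, u) (b, v) = (inv\<^bsub>H l\<^esub> (b, v) \<otimes>\<^bsub>H l\<^esub> (a, u)) \<otimes>\<^bsub>H l\<^esub> (b, v)"
  using E[unfolded mcq_def H_carrier, THEN conjunct2, THEN conjunct2, THEN conjunct2, THEN conjunct1] by blast
lemma E_ii: "x \<in> S \<Longrightarrow> l \<in> Lam \<Longrightarrow> a \<in> carrier (G l) \<Longrightarrow> b \<in> carrier (G l) \<Longrightarrow>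
   ET (x, w) \<one>\<^bsub>H l\<^esub> = (x, w) \<and> ET (x, w) ((a, u) \<otimes>\<^bsub>H l\<^esub> (b, v)) = ET (ET (x, w) (a, u)) (b, v)"
  using E[unfolded mcq_def H_carrier H_set, THEN conjunct2, THEN conjunct2, THEN conjunct2, THEN conjunct2, THEN conjunct1] by blast
lemma E_iii: "x \<in> S \<Longrightarrow> y \<in> S \<Longrightarrow> z \<in> S \<Longrightarrow> ET (ET (x, u) (y, v)) (z, w) = ET (ET (x, u) (z, w)) (ET (y, v) (z, w))"
  using E[unfolded mcq_def H_carrier H_set, THEN conjunct2, THEN conjunct2, THEN conjunct2, THEN conjunct2, THEN conjunct2, THEN conjunct1] by blast
lemma E_iv: "x \<in> S \<Longrightarrow> l \<in> Lam \<Longrightarrow> a \<in> carrier (G l) \<Longrightarrow> b \<in> carrier (G l) \<Longrightarrow>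
   \<exists>m\<in>Lam. ET (a, u) (x, w) \<in> carrier (H m) \<and> ET (b, v) (x, w) \<in> carrier (H m) \<and>
          ET ((a, u) \<otimes>\<^bsub>H l\<^esub> (b, v)) (x, w) = ET (a, u) (x, w) \<otimes>\<^bsub>H m\<^esub> ET (b, v) (x, w)"
proof -
  assume "x \<in> S" "l \<in> Lam" "a \<in> carrier (G l)" "b \<in> carrier (G l)"
  then have "(x, w) \<in> mcq_set Lam H" "(a, u) \<in> carrier (H l)" "(b, v) \<in> carrier (H l)"
    by (auto simp: H_set H_carrier)
  then show ?thesis using E[unfolded mcq_def, THEN conjunct2, THEN conjunct2, THEN conjunct2, THEN conjunct2, THEN conjunct2, THEN conjunct2] \<open>l \<in> Lam\<close> by blast
qed

definition eps where "eps l = snd (e l)"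

lemma unit:
  assumes l: "l \<in> Lam"
  shows "e l = (\<one>\<^bsub>G l\<^esub>, eps l)"
    "\<And>b. b \<in> carrier (G l) \<Longrightarrow> \<psi>2 \<one>\<^bsub>G l\<^esub> b = - eps l"
    "g1 \<one>\<^bsub>G l\<^esub> (inv\<^bsub>G l\<^esub> \<one>\<^bsub>G l\<^esub>) = 1"
    "\<And>a. a \<in> carrier (G l) \<Longrightarrow> \<psi>2 a \<one>\<^bsub>G l\<^esub> = - g1 a (inv\<^bsub>G l\<^esub> a) * eps l"
proof -
  interpret h: group "H l" using Hgrp l .
  interpret g: group "G l" using grp l .
  have ec: "e l \<in> carrier (H l)" using h.one_closed H_one by simp
  obtain c where c: "e l = (c, eps l)" by (metis eps_def prod.collapse)
  have cc: "c \<in> carrier (G l)" using ec c H_carrier by auto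
  have "e l \<otimes>\<^bsub>H l\<^esub> e l = e l" using H_one ec by (metis h.l_one)
  then have "c \<otimes>\<^bsub>G l\<^esub> c = c" using c H_mult by simp
  then have "c = \<one>\<^bsub>G l\<^esub>" using cc by simp
  then show e: "e l = (\<one>\<^bsub>G l\<^esub>, eps l)" using c by simp
  have lone: "eps l + g1 \<one>\<^bsub>G l\<^esub> (inv\<^bsub>G l\<^esub> \<one>\<^bsub>G l\<^esub>) * v + \<psi>2 \<one>\<^bsub>G l\<^esub> b = v"
    if b: "b \<in> carrier (G l)" for b v
  proof -
    have "\<one>\<^bsub>H l\<^esub> \<otimes>\<^bsub>H l\<^esub> (b, v) = (b, v)" using b by (simp add: H_carrier)
    then show ?thesis using e b by (simp add: H_one H_mult)
  qed
  show p: "\<psi>2 \<one>\<^bsub>G l\<^esub> b = - eps l" if b: "b \<in> carrier (G l)" for b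
    using lone[OF b, of 0] by (simp add: eq_neg_iff_add_eq_0 add.commute)
  show F: "g1 \<one>\<^bsub>G l\<^esub> (inv\<^bsub>G l\<^esub> \<one>\<^bsub>G l\<^esub>) = 1"
    using lone[OF g.one_closed, of 1] p[OF g.one_closed] by simp
  show "\<psi>2 a \<one>\<^bsub>G l\<^esub> = - g1 a (inv\<^bsub>G l\<^esub> a) * eps l" if a: "a \<in> carrier (G l)" for a
  proof -
    have "(a, 0) \<otimes>\<^bsub>H l\<^esub> \<one>\<^bsub>H l\<^esub> = (a, 0)" using a by (simp add: H_carrier)
    then show ?thesis using e a by (simp add: H_one H_mult eq_neg_iff_add_eq_0 add.commute)
  qed
qed

lemma assoc_eq:
  assumes l: "l \<in> Lam" and a: "a \<in> carrier (G l)" and b: "b \<in> carrier (G l)" and c: "c \<in> carrier (G l)"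
  shows "\<psi>2 a b + \<psi>2 (a \<otimes>\<^bsub>G l\<^esub> b) c = g1 a (inv\<^bsub>G l\<^esub> a) * \<psi>2 b c + \<psi>2 a (b \<otimes>\<^bsub>G l\<^esub> c)"
proof -
  interpret h: group "H l" using Hgrp l .
  have "((a, 0) \<otimes>\<^bsub>H l\<^esub> (b, 0)) \<otimes>\<^bsub>H l\<^esub> (c, 0) = (a, 0) \<otimes>\<^bsub>H l\<^esub> ((b, 0) \<otimes>\<^bsub>H l\<^esub> (c, 0))"
    using a b c by (intro h.m_assoc) (auto simp: H_carrier)
  then show ?thesis by (simp add: H_mult)
qed

lemma H_inv:
  assumes l: "l \<in> Lam" and b: "b \<in> carrier (G l)"
  shows "inv\<^bsub>H l\<^esub> (b, v) = (inv\<^bsub>G l\<^esub> b, eps l - g1 (inv\<^bsub>G l\<^esub> b) (inv\<^bsub>G l\<^esub> (inv\<^bsub>G l\<^esub> b)) * v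
     - \<psi>2 (inv\<^bsub>G l\<^esub> b) b)"
proof -
  interpret h: group "H l" using Hgrp l .
  interpret g: group "G l" using grp l .
  show ?thesis
    by (rule h.inv_equality) (use b unit(1)[OF l] in \<open>auto simp: H_mult H_one H_carrier\<close>)
qed

lemma i_eq:
  assumes l: "l \<in> Lam" and a: "a \<in> carrier (G l)" and b: "b \<in> carrier (G l)"
  defines "bi \<equiv> inv\<^bsub>G l\<^esub> b"
  shows "g1 a b * u + g2 a b * v + \<psi>1 a b = eps l - g1 bi (inv\<^bsub>G l\<^esub> bi) * v - \<psi>2 bi b
     + g1 bi (inv\<^bsub>G l\<^esub> bi) * u + \<psi>2 bi a
     + g1 (bi \<otimes>\<^bsub>G l\<^esub> a) (inv\<^bsub>G l\<^esub> (bi \<otimes>\<^bsub>G l\<^esub> a)) * v + \<psi>2 (bi \<otimes>\<^bsub>G l\<^esub> a) b"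
  using E_i[OF l a b, of u v] H_inv[OF l b, of v] unfolding bi_def[symmetric]
  by (simp add: ET_simp H_mult algebra_simps)

lemma i_facts:
  assumes l: "l \<in> Lam" and a: "a \<in> carrier (G l)" and b: "b \<in> carrier (G l)"
  defines "bi \<equiv> inv\<^bsub>G l\<^esub> b"
  shows "\<psi>1 a b = eps l - \<psi>2 bi b + \<psi>2 bi a + \<psi>2 (bi \<otimes>\<^bsub>G l\<^esub> a) b"
    "g1 a b = g1 bi (inv\<^bsub>G l\<^esub> bi)"
    "g2 a b = g1 (bi \<otimes>\<^bsub>G l\<^esub> a) (inv\<^bsub>G l\<^esub> (bi \<otimes>\<^bsub>G l\<^esub> a)) - g1 bi (inv\<^bsub>G l\<^esub> bi)"
proof -
  note i = i_eq[OF l a b, folded bi_def]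
  show c0: "\<psi>1 a b = eps l - \<psi>2 bi b + \<psi>2 bi a + \<psi>2 (bi \<otimes>\<^bsub>G l\<^esub> a) b"
    using i[of 0 0] by simp
  show "g1 a b = g1 bi (inv\<^bsub>G l\<^esub> bi)" using lin_diff[OF i[of 1 0] i[of 0 0]] by (simp add: algebra_simps)
  show "g2 a b = g1 (bi \<otimes>\<^bsub>G l\<^esub> a) (inv\<^bsub>G l\<^esub> (bi \<otimes>\<^bsub>G l\<^esub> a)) - g1 bi (inv\<^bsub>G l\<^esub> bi)"
    using lin_diff[OF i[of 0 1] i[of 0 0]] by (simp add: algebra_simps)
qed


lemma ii_facts:
  assumes x: "x \<in> S" and l: "l \<in> Lam" and a: "a \<in> carrier (G l)" and b: "b \<in> carrier (G l)"
  shows "g1 x \<one>\<^bsub>G l\<^esub> = 1"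
    "g1 x (a \<otimes>\<^bsub>G l\<^esub> b) = g1 (tri x a) b * g1 x a"
    "g2 x (a \<otimes>\<^bsub>G l\<^esub> b) = g1 (tri x a) b * g2 x a"
    "g2 x (a \<otimes>\<^bsub>G l\<^esub> b) * \<psi>2 a b + \<psi>1 x (a \<otimes>\<^bsub>G l\<^esub> b) = g1 (tri x a) b * \<psi>1 x a + \<psi>1 (tri x a) b"
proof -
  have o: "g1 x \<one>\<^bsub>G l\<^esub> * w + g2 x \<one>\<^bsub>G l\<^esub> * eps l + \<psi>1 x \<one>\<^bsub>G l\<^esub> = w" for w
    using E_ii[OF x l a b, of w] unit(1)[OF l] by (simp add: H_one ET_simp)
  show "g1 x \<one>\<^bsub>G l\<^esub> = 1" using o[of 0] o[of 1] by (simp add: add.assoc)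
  have g: "g1 x (a \<otimes>\<^bsub>G l\<^esub> b) * w + g2 x (a \<otimes>\<^bsub>G l\<^esub> b) * (u + g1 a (inv\<^bsub>G l\<^esub> a) * v + \<psi>2 a b)
     + \<psi>1 x (a \<otimes>\<^bsub>G l\<^esub> b) = g1 (tri x a) b * (g1 x a * w + g2 x a * u + \<psi>1 x a)
     + g2 (tri x a) b * v + \<psi>1 (tri x a) b" for u v w
    using E_ii[OF x l a b, of w u v] by (simp add: H_mult ET_simp)
  show z: "g2 x (a \<otimes>\<^bsub>G l\<^esub> b) * \<psi>2 a b + \<psi>1 x (a \<otimes>\<^bsub>G l\<^esub> b) = g1 (tri x a) b * \<psi>1 x a + \<psi>1 (tri x a) b"
    using g[of 0 0 0] by simp
  show "g1 x (a \<otimes>\<^bsub>G l\<^esub> b) = g1 (tri x a) b * g1 x a" using lin_diff[OF g[where u=0 and v=0 and w=1] g[of 0 0 0]] by (simp add: algebra_simps)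
  show "g2 x (a \<otimes>\<^bsub>G l\<^esub> b) = g1 (tri x a) b * g2 x a" using lin_diff[OF g[where u=1 and v=0 and w=0] g[of 0 0 0]] by (simp add: algebra_simps)
qed

lemma iii_facts:
  assumes x: "x \<in> S" and y: "y \<in> S" and z: "z \<in> S"
  shows "g1 (tri x y) z * g1 x y = g1 (tri x z) (tri y z) * g1 x z \<and>
        g1 (tri x y) z * g2 x y = g2 (tri x z) (tri y z) * g1 y z \<and>
        g2 (tri x y) z = g1 (tri x z) (tri y z) * g2 x z + g2 (tri x z) (tri y z) * g2 y z"
    "g1 (tri x y) z * \<psi>1 x y + \<psi>1 (tri x y) z
          = g1 (tri x z) (tri y z) * \<psi>1 x z + g2 (tri x z) (tri y z) * \<psi>1 y z
            + \<psi>1 (tri x z) (tri y z)"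
proof -
  have g: "g1 (tri x y) z * (g1 x y * u + g2 x y * v + \<psi>1 x y) + g2 (tri x y) z * w + \<psi>1 (tri x y) z
     = g1 (tri x z) (tri y z) * (g1 x z * u + g2 x z * w + \<psi>1 x z)
       + g2 (tri x z) (tri y z) * (g1 y z * v + g2 y z * w + \<psi>1 y z) + \<psi>1 (tri x z) (tri y z)" for u v w
    using E_iii[OF x y z, of u v w] by (simp add: ET_simp)
  show z0: "g1 (tri x y) z * \<psi>1 x y + \<psi>1 (tri x y) z
          = g1 (tri x z) (tri y z) * \<psi>1 x z + g2 (tri x z) (tri y z) * \<psi>1 y z
            + \<psi>1 (tri x z) (tri y z)" using g[of 0 0 0] by (simp add: algebra_simps)
  show "g1 (tri x y) z * g1 x y = g1 (tri x z) (tri y z) * g1 x z \<and>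
        g1 (tri x y) z * g2 x y = g2 (tri x z) (tri y z) * g1 y z \<and>
        g2 (tri x y) z = g1 (tri x z) (tri y z) * g2 x z + g2 (tri x z) (tri y z) * g2 y z"
    using lin_diff[OF g[of 1 0 0] g[of 0 0 0]] lin_diff[OF g[of 0 1 0] g[of 0 0 0]] lin_diff[OF g[of 0 0 1] g[of 0 0 0]] by (simp add: algebra_simps)
qed

lemma iv_eq:
  assumes x: "x \<in> S" and l: "l \<in> Lam" and a: "a \<in> carrier (G l)" and b: "b \<in> carrier (G l)"
  shows "g1 (a \<otimes>\<^bsub>G l\<^esub> b) x * (u + g1 a (inv\<^bsub>G l\<^esub> a) * v + \<psi>2 a b) + g2 (a \<otimes>\<^bsub>G l\<^esub> b) x * w
     + \<psi>1 (a \<otimes>\<^bsub>G l\<^esub> b) x = g1 a x * u + g2 a x * w + \<psi>1 a x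
     + g1 (tri a x) (tri (inv\<^bsub>G l\<^esub> a) x) * (g1 b x * v + g2 b x * w + \<psi>1 b x) + \<psi>2 (tri a x) (tri b x)"
proof -
  obtain m where m: "m \<in> Lam" "ET (a, u) (x, w) \<in> carrier (H m)"
    "ET ((a, u) \<otimes>\<^bsub>H l\<^esub> (b, v)) (x, w) = ET (a, u) (x, w) \<otimes>\<^bsub>H m\<^esub> ET (b, v) (x, w)"
    using E_iv[OF x l a b, of u w v] by blast
  have am: "tri a x \<in> carrier (G m)" using m(2) by (simp add: ET_simp H_carrier)
  have iv: "inv\<^bsub>G m\<^esub> (tri a x) = tri (inv\<^bsub>G l\<^esub> a) x" using tri_inv_img[OF l a x m(1) am] by simp
  show ?thesis using m(3) iv by (simp add: ET_simp H_mult)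
qed

lemma A2a':
  assumes l: "l \<in> Lam" and a: "a \<in> carrier (G l)" and b: "b \<in> carrier (G l)" and x: "x \<in> S"
  shows "g1 a x = g1 b x"
proof -
  interpret g: group "G l" using grp l .
  have k: "g1 (c \<otimes>\<^bsub>G l\<^esub> d) x = g1 c x" if "c \<in> carrier (G l)" "d \<in> carrier (G l)" for c d
  proof -
    note q = iv_eq[OF x l that]
    show ?thesis using lin_diff[OF q[of 1 0 0] q[of 0 0 0]] by (simp add: algebra_simps)
  qed
  show ?thesis using k[OF g.one_closed a] k[OF g.one_closed b] a b by simp
qed

lemma result: "aug_alexander_pair Lam G tri (*) g1 g2 \<psi>1 \<psi>2"
  unfolding aug_alexander_pair_def alexander_pair_def twisted_cocycle_def
proof (intro conjI ballI allI)
  fix l a b assume l: "l \<in> Lam" and a: "a \<in> carrier (G l)" and b: "b \<in> carrier (G l)"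
  interpret g: group "G l" using grp l .
  define bi where "bi = inv\<^bsub>G l\<^esub> b"
  have bi: "bi \<in> carrier (G l)" using b bi_def by simp
  note i = i_facts[OF l a b, folded bi_def]
  have "g1 a (inv\<^bsub>G l\<^esub> a \<otimes>\<^bsub>G l\<^esub> b) = g1 (bi \<otimes>\<^bsub>G l\<^esub> a) (inv\<^bsub>G l\<^esub> (bi \<otimes>\<^bsub>G l\<^esub> a))"
    using A2a'[OF l a _ inS[OF l], of "bi \<otimes>\<^bsub>G l\<^esub> a" "inv\<^bsub>G l\<^esub> a \<otimes>\<^bsub>G l\<^esub> b"] a b bi
    by (simp add: g.inv_mult_group bi_def)
  then show "g1 a b + g2 a b = g1 a (inv\<^bsub>G l\<^esub> a \<otimes>\<^bsub>G l\<^esub> b)" using i by simp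
  fix c assume c: "c \<in> carrier (G l)"
  show "\<psi>2 a b + \<psi>2 (a \<otimes>\<^bsub>G l\<^esub> b) c = g1 a (inv\<^bsub>G l\<^esub> a) * \<psi>2 b c + \<psi>2 a (b \<otimes>\<^bsub>G l\<^esub> c)"
    using assoc_eq[OF l a b c] .
next
  fix l a b x assume l: "l \<in> Lam" and a: "a \<in> carrier (G l)" and b: "b \<in> carrier (G l)" and x: "x \<in> S"
  show "g1 a x = g1 b x" using A2a'[OF l a b x] .
  obtain m where m: "m \<in> Lam" "tri a x \<in> carrier (G m)" "tri b x \<in> carrier (G m)"
    using tri_hom[OF x l a b] by blast
  interpret g: group "G l" using grp l .
  have K: "g1 (tri b x) (tri (inv\<^bsub>G l\<^esub> a) x) = g1 (tri a x) (tri (inv\<^bsub>G l\<^esub> a) x)"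
    using A2a'[OF m(1) m(3) m(2)] tri_S[OF inS[OF l] x] a by simp
  note q = iv_eq[OF x l a b]
  show "g2 (a \<otimes>\<^bsub>G l\<^esub> b) x = g2 a x + g1 (tri b x) (tri (inv\<^bsub>G l\<^esub> a) x) * g2 b x"
    using lin_diff[OF q[of 0 0 1] q[of 0 0 0]] K by (simp add: algebra_simps)
  show "g1 (a \<otimes>\<^bsub>G l\<^esub> b) x * \<psi>2 a b + \<psi>1 (a \<otimes>\<^bsub>G l\<^esub> b) x
          = \<psi>1 a x + g1 (tri a x) (tri (inv\<^bsub>G l\<^esub> a) x) * \<psi>1 b x + \<psi>2 (tri a x) (tri b x)"
    using q[of 0 0 0] by simp
next
  fix x l assume x: "x \<in> S" and l: "l \<in> Lam"
  interpret g: group "G l" using grp l .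
  show "g1 x \<one>\<^bsub>G l\<^esub> = 1" using ii_facts(1)[OF x l g.one_closed g.one_closed] .
  fix a b assume a: "a \<in> carrier (G l)" and b: "b \<in> carrier (G l)"
  show "g1 x (a \<otimes>\<^bsub>G l\<^esub> b) = g1 (tri x a) b * g1 x a" using ii_facts(2)[OF x l a b] .
  show "g2 x (a \<otimes>\<^bsub>G l\<^esub> b) = g1 (tri x a) b * g2 x a" using ii_facts(3)[OF x l a b] .
  show "g2 x (a \<otimes>\<^bsub>G l\<^esub> b) * \<psi>2 a b + \<psi>1 x (a \<otimes>\<^bsub>G l\<^esub> b) = g1 (tri x a) b * \<psi>1 x a + \<psi>1 (tri x a) b"
    using ii_facts(4)[OF x l a b] .
next
  fix x y z assume x: "x \<in> S" and y: "y \<in> S" and z: "z \<in> S"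
  note iii = iii_facts[OF x y z]
  show "g1 (tri x y) z * g1 x y = g1 (tri x z) (tri y z) * g1 x z" using iii by blast
  show "g1 (tri x y) z * g2 x y = g2 (tri x z) (tri y z) * g1 y z" using iii by blast
  show "g2 (tri x y) z = g1 (tri x z) (tri y z) * g2 x z + g2 (tri x z) (tri y z) * g2 y z" using iii by blast
  show "g1 (tri x y) z * \<psi>1 x y + \<psi>1 (tri x y) z
          = g1 (tri x z) (tri y z) * \<psi>1 x z + g2 (tri x z) (tri y z) * \<psi>1 y z
            + \<psi>1 (tri x z) (tri y z)" using iii by blast
next
  fix l a b assume l: "l \<in> Lam" and a: "a \<in> carrier (G l)" and b: "b \<in> carrier (G l)"
  interpret g: group "G l" using grp l .
  define bi where "bi = inv\<^bsub>G l\<^esub> b"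
  have bi: "bi \<in> carrier (G l)" using b bi_def by simp
  define c where "c = (bi \<otimes>\<^bsub>G l\<^esub> a) \<otimes>\<^bsub>G l\<^esub> b"
  define F where "F = g1 b (inv\<^bsub>G l\<^esub> b)"
  have ba: "b \<otimes>\<^bsub>G l\<^esub> (bi \<otimes>\<^bsub>G l\<^esub> a) = a" using a b unfolding bi_def by (simp add: g.m_assoc[symmetric])
  have e1: "\<psi>2 b bi - eps l = F * \<psi>2 bi a + \<psi>2 b (bi \<otimes>\<^bsub>G l\<^esub> a)"
    using assoc_eq[OF l b bi a] unit(2)[OF l a] b unfolding F_def bi_def by simp
  have e2: "\<psi>2 b (bi \<otimes>\<^bsub>G l\<^esub> a) + \<psi>2 a b = F * \<psi>2 (bi \<otimes>\<^bsub>G l\<^esub> a) b + \<psi>2 b c"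
    using assoc_eq[OF l b _ b, of "bi \<otimes>\<^bsub>G l\<^esub> a"] ba a bi unfolding F_def c_def
    by (simp add: g.m_assoc)
  have e3: "\<psi>2 b bi - eps l = F * \<psi>2 bi b - F * eps l"
    using assoc_eq[OF l b bi b] unit(2)[OF l b] unit(4)[OF l b] b unfolding F_def bi_def by simp
  have s1: "F * \<psi>2 bi a = \<psi>2 b bi - eps l - \<psi>2 b (bi \<otimes>\<^bsub>G l\<^esub> a)" using e1 by (simp add: algebra_simps)
  have s2: "F * \<psi>2 (bi \<otimes>\<^bsub>G l\<^esub> a) b = \<psi>2 b (bi \<otimes>\<^bsub>G l\<^esub> a) + \<psi>2 a b - \<psi>2 b c"
    using e2 by (simp add: algebra_simps)
  have s3: "F * \<psi>2 bi b = \<psi>2 b bi - eps l + F * eps l" using e3 by (simp add: algebra_simps)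
  have "F * \<psi>1 a b = F * eps l - F * \<psi>2 bi b + F * \<psi>2 bi a + F * \<psi>2 (bi \<otimes>\<^bsub>G l\<^esub> a) b"
    using i_facts(1)[OF l a b, folded bi_def] by (simp add: ring_distribs)
  also have "\<dots> = \<psi>2 a b - \<psi>2 b c" unfolding s1 s2 s3 by (simp add: algebra_simps)
  finally have "F * \<psi>1 a b + \<psi>2 b c = \<psi>2 a b" by simp
  then show "g1 b (inv\<^bsub>G l\<^esub> b) * \<psi>1 a b + \<psi>2 b ((inv\<^bsub>G l\<^esub> b \<otimes>\<^bsub>G l\<^esub> a) \<otimes>\<^bsub>G l\<^esub> b) = \<psi>2 a b"
    unfolding F_def c_def bi_def .
qed

end


theorem proposition2p4:
  fixes Lam :: "'l set" and G :: "'l \<Rightarrow> 'a monoid" and tri :: "'a \<Rightarrow> 'a \<Rightarrow> 'a"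
    and s :: "'r::ring_1 \<Rightarrow> 'm::ab_group_add \<Rightarrow> 'm"
    and f1 f2 :: "'a \<Rightarrow> 'a \<Rightarrow> 'r" and \<phi>1 \<phi>2 :: "'a \<Rightarrow> 'a \<Rightarrow> 'm"
    and g1 g2 \<psi>1 \<psi>2 :: "'a \<Rightarrow> 'a \<Rightarrow> 'r"
  assumes X: "mcq Lam G tri"
    and M: "lmodule s"
  shows "(aug_alexander_pair Lam G tri s f1 f2 \<phi>1 \<phi>2 \<longrightarrow>
            mcq Lam (\<lambda>l. ext_group G s f1 \<phi>2 l (\<one>\<^bsub>G l\<^esub>, - \<phi>2 \<one>\<^bsub>G l\<^esub> \<one>\<^bsub>G l\<^esub>))
                (ext_tri tri s f1 f2 \<phi>1) \<and>
            (\<forall>l\<in>Lam. \<forall>a\<in>carrier (G l). \<forall>u.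
               inv\<^bsub>ext_group G s f1 \<phi>2 l (\<one>\<^bsub>G l\<^esub>, - \<phi>2 \<one>\<^bsub>G l\<^esub> \<one>\<^bsub>G l\<^esub>)\<^esub> (a, u)
                 = (inv\<^bsub>G l\<^esub> a,
                    - s (f1 a a) u - \<phi>2 (inv\<^bsub>G l\<^esub> a) a - \<phi>2 \<one>\<^bsub>G l\<^esub> \<one>\<^bsub>G l\<^esub>)))
       \<and> ((\<exists>e. mcq Lam (\<lambda>l. ext_group G (*) g1 \<psi>2 l (e l)) (ext_tri tri (*) g1 g2 \<psi>1)) \<longrightarrow>
            aug_alexander_pair Lam G tri (*) g1 g2 \<psi>1 \<psi>2)"
proof (intro conjI impI ballI allI)
  assume A: "aug_alexander_pair Lam G tri s f1 f2 \<phi>1 \<phi>2"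
  have AP: "alexander_pair Lam G tri f1 f2" and TC: "twisted_cocycle Lam G tri s f1 f2 \<phi>1 \<phi>2"
    using A unfolding aug_alexander_pair_def by (rule conjunct1, rule conjunct2)
  interpret aug Lam G tri f1 f2 s \<phi>1 \<phi>2
    by unfold_locales (fact X M AP TC)+
  show "mcq Lam (\<lambda>l. ext_group G s f1 \<phi>2 l (\<one>\<^bsub>G l\<^esub>, - \<phi>2 \<one>\<^bsub>G l\<^esub> \<one>\<^bsub>G l\<^esub>))
                (ext_tri tri s f1 f2 \<phi>1)" using EG_mcq .
  fix l a u assume "l \<in> Lam" "a \<in> carrier (G l)"
  then show "inv\<^bsub>ext_group G s f1 \<phi>2 l (\<one>\<^bsub>G l\<^esub>, - \<phi>2 \<one>\<^bsub>G l\<^esub> \<one>\<^bsub>G l\<^esub>)\<^esub> (a, u)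
                 = (inv\<^bsub>G l\<^esub> a,
                    - s (f1 a a) u - \<phi>2 (inv\<^bsub>G l\<^esub> a) a - \<phi>2 \<one>\<^bsub>G l\<^esub> \<one>\<^bsub>G l\<^esub>)"
    using EG_group by blast
next
  assume "\<exists>e. mcq Lam (\<lambda>l. ext_group G (*) g1 \<psi>2 l (e l)) (ext_tri tri (*) g1 g2 \<psi>1)"
  then obtain e where E: "mcq Lam (\<lambda>l. ext_group G (*) g1 \<psi>2 l (e l)) (ext_tri tri (*) g1 g2 \<psi>1)" by blast
  interpret conv Lam G tri g1 g2 \<psi>1 \<psi>2 e by unfold_locales (fact X E)+
  show "aug_alexander_pair Lam G tri (*) g1 g2 \<psi>1 \<psi>2" using result .
qed

end
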